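(* Let $R$ be a $*$-ring with unity and $a,b\in R$. The following are equivalent: (i) $a$ and $b$ are generalized comparable; (ii) there exist decompositions $a=x+y$ and $b=z+w$ with $x\perp y$, $z\perp w$, $x\sim z$, and $y,w$ very orthogonal.
   Context: Natural partial order: $a\leq b$ iff there is $x\in R$ with $a=xa=xb=ax^*=bx^*$. Orthogonality: $a\perp b$ iff there is $x\in R$ with $xa=a=ax^*$, $xb=0=bx^*$. Equivalence: $a\sim b$ iff there exist $x,y\in R$ with $aa^*=xx^*$, $bb^*=yy^*$, $a^*a=y^*y$, $b^*b=x^*x$, $x=ax=xb$, $y=by=ya$. Dominance: $a\lesssim b$ iff $a\sim c\leq b$ for some $c$. $a,b$ are generalized comparable if there is a central projection $h$ ($h=h^2=h^*$ central) with $ha\lesssim hb$ and $(1-h)b\lesssim(1-h)a$. $y,w$ are very orthogonal if there is a central projection $h$ with $hy=y$ and $hw=0$ (or with the roles interchanged as needed; the paper's definition: $ha=a$, $hb=0$ for the pair $(a,b)$, and in (ii) $y,w$ very orthogonal is used with $hw=w$, $hy=0$). *)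

theory Defs
  imports Main
begin

class star_ring = ring_1 +
  fixes star :: "'a \<Rightarrow> 'a"
  assumes star_add: "star (x + y) = star x + star y"
      and star_mult: "star (x * y) = star y * star x"
      and star_star: "star (star x) = x"

definition npo :: "'a::star_ring \<Rightarrow> 'a \<Rightarrow> bool" where
  "npo a b \<longleftrightarrow> (\<exists>x. a = x * a \<and> x * a = x * b \<and> x * b = a * star x \<and> a * star x = b * star x)"

definition orth :: "'a::star_ring \<Rightarrow> 'a \<Rightarrow> bool" where
  "orth a b \<longleftrightarrow> (\<exists>x. x * a = a \<and> a = a * star x \<and> x * b = 0 \<and> b * star x = 0)"

definition sequiv :: "'a::star_ring \<Rightarrow> 'a \<Rightarrow> bool" where
  "sequiv a b \<longleftrightarrow> (\<exists>x y. a * star a = x * star x \<and> b * star b = y * star y \<and>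
      star a * a = star y * y \<and> star b * b = star x * x \<and>
      x = a * x \<and> a * x = x * b \<and> y = b * y \<and> b * y = y * a)"

definition dominated :: "'a::star_ring \<Rightarrow> 'a \<Rightarrow> bool" where
  "dominated a b \<longleftrightarrow> (\<exists>c. sequiv a c \<and> npo c b)"

definition central_proj :: "'a::star_ring \<Rightarrow> bool" where
  "central_proj h \<longleftrightarrow> h = h * h \<and> h = star h \<and> (\<forall>r. h * r = r * h)"

definition gen_comparable :: "'a::star_ring \<Rightarrow> 'a \<Rightarrow> bool" where
  "gen_comparable a b \<longleftrightarrow> (\<exists>h. central_proj h \<and> dominated (h * a) (h * b)
      \<and> dominated ((1 - h) * b) ((1 - h) * a))"

definition very_orth :: "'a::star_ring \<Rightarrow> 'a \<Rightarrow> bool" where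
  "very_orth a b \<longleftrightarrow> (\<exists>h. central_proj h \<and> h * a = a \<and> h * b = 0)"

end

theory Submission
  imports Defs
begin

lemma star_zero: "star (0::'a::star_ring) = 0"
proof -
  have "star (0::'a) = star 0 + star 0" by (metis add_0 star_add)
  thus ?thesis by simp
qed

lemma star_one: "star (1::'a::star_ring) = 1"
  by (metis mult_1_left mult_1_right star_mult star_star)

lemma star_diff: "star ((x::'a::star_ring) - y) = star x - star y"
proof -
  have "star (x - y) + star y = star x" by (metis diff_add_cancel star_add)
  thus ?thesis by (simp add: eq_diff_eq)
qed

lemma cp_facts:
  assumes "central_proj (h::'a::star_ring)"
  shows "h*h = h" "star h = h" "h*r = r*h"
proof -
  have 1: "h = h*h" and 2: "h = star h" and 3: "\<forall>r. h*r = r*h"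
    using assms unfolding central_proj_def by blast+
  show "h*h = h" using 1 by (rule sym)
  show "star h = h" using 2 by (rule sym)
  show "h*r = r*h" using 3 by blast
qed

lemma cp_compl:
  assumes "central_proj (h::'a::star_ring)"
  shows "central_proj (1 - h)"
proof -
  note c = cp_facts[OF assms]
  have "(1-h)*(1-h) = 1 - h - h + h*h" by (simp add: algebra_simps)
  also have "\<dots> = 1 - h" using c(1) by simp
  finally have 1: "1 - h = (1-h)*(1-h)" by simp
  have 2: "1 - h = star (1 - h)" by (simp add: star_diff star_one c(2))
  have 3: "\<forall>r. (1-h)*r = r*(1-h)" by (simp add: algebra_simps c(3))
  show ?thesis unfolding central_proj_def using 1 2 3 by blast
qed

lemma sequiv_sym: "sequiv (a::'a::star_ring) b \<Longrightarrow> sequiv b a"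
  unfolding sequiv_def by metis

lemma npo_of_orth:
  assumes "orth (c::'a::star_ring) e" "\<forall>r. k*r = r*k"
  shows "npo (k*c) (k*c+e)"
proof -
  obtain u where u: "u*c = c" "c = c*star u" "u*e = 0" "e*star u = 0"
    using assms(1) unfolding orth_def by blast
  have 1: "u*(k*c) = k*c" by (metis assms(2) mult.assoc u(1))
  have 2: "k*c*star u = k*c" by (metis mult.assoc u(2))
  show ?thesis unfolding npo_def
  proof (rule exI[of _ u], intro conjI)
    show "k * c = u * (k * c)" using 1 by simp
    show "u * (k * c) = u * (k * c + e)" by (simp add: distrib_left u(3))
    show "u * (k * c + e) = k * c * star u" by (simp add: distrib_left u(3) 1 2)
    show "k * c * star u = (k * c + e) * star u" by (simp add: distrib_right u(4))
  qed
qed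

lemma sequiv_central:
  assumes "central_proj (k::'a::star_ring)" "sequiv x z"
  shows "sequiv (k*x) (k*z)"
proof -
  note c = cp_facts[OF assms(1)]
  obtain p q where pq: "x * star x = p * star p" "z * star z = q * star q"
      "star x * x = star q * q" "star z * z = star p * p"
      "p = x * p" "x * p = p * z" "q = z * q" "z * q = q * x"
    using assms(2) unfolding sequiv_def by blast
  have gen: "k*u * star (k*v) = k*(u*star v)" for u v
    by (simp add: star_mult c(2)) (metis c(1) c(3) mult.assoc)
  have gen2: "star (k*u) * (k*v) = k*(star u * v)" for u v
    by (simp add: star_mult c(2)) (metis c(1) c(3) mult.assoc)
  have gen3: "k*u * (k*v) = k*(u*v)" for u v
    by (metis c(1) c(3) mult.assoc)
  show ?thesis unfolding sequiv_def
    apply (rule exI[of _ "k*p"], rule exI[of _ "k*q"])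
    using pq(1-4,6,8) pq(5,7)[symmetric] by (simp add: gen gen2 gen3)
qed

lemma sequiv_add:
  assumes h: "central_proj (h::'a::star_ring)"
    and s1: "sequiv a1 c1" and s2: "sequiv a2 c2"
    and "h*a1 = a1" "h*c1 = c1" "h*a2 = 0" "h*c2 = 0"
  shows "sequiv (a1+a2) (c1+c2)"
proof -
  note c = cp_facts[OF h]
  define P where "P u \<longleftrightarrow> h*u = u" for u
  define Q where "Q v \<longleftrightarrow> h*v = 0" for v
  have Ps: "P (star u)" if "P u" for u
  proof -
    have "star u = star (h*u)" using that unfolding P_def by simp
    also have "\<dots> = star u * h" by (simp add: star_mult c(2))
    also have "\<dots> = h * star u" by (rule c(3)[symmetric])
    finally show ?thesis unfolding P_def by simp
  qed
  have Qs: "Q (star v)" if "Q v" for v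
  proof -
    have "0 = star (h*v)" using that unfolding Q_def by (simp add: star_zero)
    also have "\<dots> = star v * h" by (simp add: star_mult c(2))
    also have "\<dots> = h * star v" by (rule c(3)[symmetric])
    finally show ?thesis unfolding Q_def by simp
  qed
  have PQ: "u*v = 0" if "P u" "Q v" for u v
  proof -
    have "u*v = (u*h)*v" using that(1) c(3)[of u] unfolding P_def by simp
    also have "\<dots> = u*(h*v)" by (simp add: mult.assoc)
    finally show ?thesis using that(2) unfolding Q_def by simp
  qed
  have QP: "v*u = 0" if "P u" "Q v" for u v
  proof -
    have "v*u = v*(h*u)" using that(1) unfolding P_def by simp
    also have "\<dots> = (h*v)*u" by (simp add: mult.assoc c(3))
    finally show ?thesis using that(2) unfolding Q_def by simp
  qed
  have PP: "P (u*v)" if "P u" for u v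
    using that unfolding P_def by (simp add: mult.assoc[symmetric])
  have QQ: "Q (u*v)" if "Q u" for u v
    using that unfolding Q_def by (simp add: mult.assoc[symmetric])
  obtain p1 q1 where pq1: "a1 * star a1 = p1 * star p1" "c1 * star c1 = q1 * star q1"
      "star a1 * a1 = star q1 * q1" "star c1 * c1 = star p1 * p1"
      "p1 = a1 * p1" "a1 * p1 = p1 * c1" "q1 = c1 * q1" "c1 * q1 = q1 * a1"
    using s1 unfolding sequiv_def by blast
  obtain p2 q2 where pq2: "a2 * star a2 = p2 * star p2" "c2 * star c2 = q2 * star q2"
      "star a2 * a2 = star q2 * q2" "star c2 * c2 = star p2 * p2"
      "p2 = a2 * p2" "a2 * p2 = p2 * c2" "q2 = c2 * q2" "c2 * q2 = q2 * a2"
    using s2 unfolding sequiv_def by blast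
  have Pa1: "P a1" "P c1" using assms(4,5) unfolding P_def by auto
  have Qa2: "Q a2" "Q c2" using assms(6,7) unfolding Q_def by auto
  have Pp1: "P p1" "P q1"
    by (subst pq1(5), rule PP[OF Pa1(1)]) (subst pq1(7), rule PP[OF Pa1(2)])
  have Qp2: "Q p2" "Q q2"
    by (subst pq2(5), rule QQ[OF Qa2(1)]) (subst pq2(7), rule QQ[OF Qa2(2)])
  have e: "(u1+u2)*star(v1+v2) = u1*star v1 + u2*star v2"
    if "P u1" "P v1" "Q u2" "Q v2" for u1 u2 v1 v2
  proof -
    have "u1*star v2 = 0" by (rule PQ[OF that(1) Qs[OF that(4)]])
    moreover have "u2*star v1 = 0" by (rule QP[OF Ps[OF that(2)] that(3)])
    ultimately show ?thesis by (simp add: star_add distrib_left distrib_right)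
  qed
  have e2: "star(u1+u2)*(v1+v2) = star u1*v1 + star u2*v2"
    if "P u1" "P v1" "Q u2" "Q v2" for u1 u2 v1 v2
  proof -
    have "star u1*v2 = 0" by (rule PQ[OF Ps[OF that(1)] that(4)])
    moreover have "star u2*v1 = 0" by (rule QP[OF that(2) Qs[OF that(3)]])
    ultimately show ?thesis by (simp add: star_add distrib_left distrib_right)
  qed
  have e3: "(u1+u2)*(v1+v2) = u1*v1 + u2*v2"
    if "P u1" "P v1" "Q u2" "Q v2" for u1 u2 v1 v2
  proof -
    have "u1*v2 = 0" by (rule PQ[OF that(1) that(4)])
    moreover have "u2*v1 = 0" by (rule QP[OF that(2) that(3)])
    ultimately show ?thesis by (simp add: distrib_left distrib_right)
  qed
  show ?thesis unfolding sequiv_def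
  proof (rule exI[of _ "p1+p2"], rule exI[of _ "q1+q2"], intro conjI)
    show "(a1 + a2) * star (a1 + a2) = (p1 + p2) * star (p1 + p2)"
      unfolding e[OF Pa1(1) Pa1(1) Qa2(1) Qa2(1)] e[OF Pp1(1) Pp1(1) Qp2(1) Qp2(1)]
      by (simp only: pq1(1) pq2(1))
    show "(c1 + c2) * star (c1 + c2) = (q1 + q2) * star (q1 + q2)"
      unfolding e[OF Pa1(2) Pa1(2) Qa2(2) Qa2(2)] e[OF Pp1(2) Pp1(2) Qp2(2) Qp2(2)]
      by (simp only: pq1(2) pq2(2))
    show "star (a1 + a2) * (a1 + a2) = star (q1 + q2) * (q1 + q2)"
      unfolding e2[OF Pa1(1) Pa1(1) Qa2(1) Qa2(1)] e2[OF Pp1(2) Pp1(2) Qp2(2) Qp2(2)]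
      by (simp only: pq1(3) pq2(3))
    show "star (c1 + c2) * (c1 + c2) = star (p1 + p2) * (p1 + p2)"
      unfolding e2[OF Pa1(2) Pa1(2) Qa2(2) Qa2(2)] e2[OF Pp1(1) Pp1(1) Qp2(1) Qp2(1)]
      by (simp only: pq1(4) pq2(4))
    show "p1 + p2 = (a1 + a2) * (p1 + p2)"
      unfolding e3[OF Pa1(1) Pp1(1) Qa2(1) Qp2(1)]
      by (simp only: pq1(5)[symmetric] pq2(5)[symmetric])
    show "(a1 + a2) * (p1 + p2) = (p1 + p2) * (c1 + c2)"
      unfolding e3[OF Pa1(1) Pp1(1) Qa2(1) Qp2(1)] e3[OF Pp1(1) Pa1(2) Qp2(1) Qa2(2)]
      by (simp only: pq1(6) pq2(6))
    show "q1 + q2 = (c1 + c2) * (q1 + q2)"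
      unfolding e3[OF Pa1(2) Pp1(2) Qa2(2) Qp2(2)]
      by (simp only: pq1(7)[symmetric] pq2(7)[symmetric])
    show "(c1 + c2) * (q1 + q2) = (q1 + q2) * (a1 + a2)"
      unfolding e3[OF Pa1(2) Pp1(2) Qa2(2) Qp2(2)] e3[OF Pp1(2) Pa1(1) Qp2(2) Qa2(1)]
      by (simp only: pq1(8) pq2(8))
  qed
qed

lemma npo_chain:
  assumes "npo (d::'a::star_ring) B"
  obtains s where "s*d = d" "s*B = d" "d*star s = d" "B*star s = d"
  using assms unfolding npo_def by metis

lemma cp_zero:
  assumes "central_proj (k::'a::star_ring)"
  shows "k*((1-k)*r) = 0" "(1-k)*(k*r) = 0"
proof -
  note c = cp_facts[OF assms]
  have "k*(1-k) = 0" by (simp add: right_diff_distrib c(1))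
  moreover have "(1-k)*k = 0" by (simp add: left_diff_distrib c(1))
  ultimately show "k*((1-k)*r) = 0" "(1-k)*(k*r) = 0"
    by (simp_all add: mult.assoc[symmetric])
qed

lemma npo_in_part:
  assumes "central_proj (k::'a::star_ring)" "npo d B" "k*B = 0"
  shows "k*d = 0"
proof -
  obtain s where s: "s*d = d" "s*B = d" "d*star s = d" "B*star s = d"
    using npo_chain[OF assms(2)] by blast
  have "k*d = (k*B)*star s" by (simp add: s(4) mult.assoc)
  thus ?thesis using assms(3) by simp
qed

lemma orth_lemma:
  assumes cp: "central_proj (k::'a::star_ring)" and kA: "k*A = A"
    and np: "npo d B" and kB: "k*B = 0"
  shows "orth (A + d) (B - d)"
proof -
  note c = cp_facts[OF cp]
  obtain s where s: "s*d = d" "s*B = d" "d*star s = d" "B*star s = d"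
    using npo_chain[OF np] by blast
  have kd: "k*d = 0" by (rule npo_in_part[OF cp np kB])
  have dk: "d*k = 0" using kd c(3)[of d] by simp
  have Ak: "A*k = A" using kA c(3)[of A] by simp
  have Bk: "B*k = 0" using kB c(3)[of B] by simp
  have oA: "(1-k)*A = 0" by (simp add: left_diff_distrib kA)
  have od: "(1-k)*d = d" by (simp add: left_diff_distrib kd)
  have do: "d*(1-k) = d" by (simp add: right_diff_distrib dk)
  have G1: "(1-k)*s*A = 0"
  proof -
    have "(1-k)*s*A = (1-k)*((s*k)*A)" by (simp add: mult.assoc kA)
    also have "\<dots> = (1-k)*(k*(s*A))" by (simp add: c(3)[of s, symmetric] mult.assoc)
    also have "\<dots> = 0" by (rule cp_zero(2)[OF cp])
    finally show ?thesis .
  qed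
  have G2: "(1-k)*s*d = d" by (simp add: mult.assoc s(1) od)
  have G3: "(1-k)*s*B = d" by (simp add: mult.assoc s(2) od)
  have H1: "A*(star s*(1-k)) = 0"
  proof -
    have "A*(star s*(1-k)) = (A*star s)*(1-k)" by (simp add: mult.assoc)
    also have "\<dots> = (1-k)*(A*star s)" using cp_facts(3)[OF cp_compl[OF cp], of "A*star s"] by simp
    also have "\<dots> = 0" by (simp add: mult.assoc[symmetric] oA)
    finally show ?thesis .
  qed
  have H2: "d*(star s*(1-k)) = d" by (simp add: mult.assoc[symmetric] s(3) do)
  have H3: "B*(star s*(1-k)) = d" by (simp add: mult.assoc[symmetric] s(4) do)
  define u where "u = k + (1-k)*s"
  have su: "star u = k + star s*(1-k)"
    unfolding u_def by (simp add: star_add star_mult star_diff star_one c(2))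
  have 1: "u*(A+d) = A+d"
    unfolding u_def by (simp add: distrib_left distrib_right kA kd G1 G2)
  have 2: "(A+d)*star u = A+d"
    unfolding su by (simp add: distrib_left distrib_right Ak dk H1 H2)
  have 3: "u*(B-d) = 0"
    unfolding u_def by (simp add: distrib_right right_diff_distrib kB kd G2 G3)
  have 4: "(B-d)*star u = 0"
    unfolding su by (simp add: distrib_left left_diff_distrib Bk dk H2 H3)
  show ?thesis unfolding orth_def using 1 2 3 4 by metis
qed

theorem mainTheorem11:
  fixes a b :: "'a::star_ring"
  shows "gen_comparable a b \<longleftrightarrow>
    (\<exists>x y z w. a = x + y \<and> b = z + w \<and> orth x y \<and> orth z w \<and> sequiv x z
       \<and> very_orth w y)"
proof
  assume "gen_comparable a b"
  then obtain h where h: "central_proj h" and d1: "dominated (h * a) (h * b)"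
      and d2: "dominated ((1 - h) * b) ((1 - h) * a)"
    unfolding gen_comparable_def by blast
  note c = cp_facts[OF h]
  have h': "central_proj (1-h)" by (rule cp_compl[OF h])
  obtain cc where cc1: "sequiv (h*a) cc" and cc2: "npo cc (h*b)"
    using d1 unfolding dominated_def by blast
  obtain d where dd1: "sequiv ((1-h)*b) d" and dd2: "npo d ((1-h)*a)"
    using d2 unfolding dominated_def by blast
  have hd: "h*d = 0" by (rule npo_in_part[OF h dd2 cp_zero(1)[OF h]])
  have hcc0: "(1-h)*cc = 0"
    by (rule npo_in_part[OF h' cc2]) (simp add: left_diff_distrib c(1) mult.assoc[symmetric])
  have hcc: "h*cc = cc" using hcc0 by (simp add: left_diff_distrib)
  have hha: "h*(h*a) = h*a" by (simp add: mult.assoc[symmetric] c(1))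
  have ohb: "(1-h)*((1-h)*b) = (1-h)*b"
    using cp_facts(1)[OF h'] by (simp add: mult.assoc[symmetric])
  have ohb0: "(1-h)*(h*b) = 0" by (rule cp_zero(2)[OF h])
  have o1: "orth (h*a + d) ((1-h)*a - d)"
    by (rule orth_lemma[OF h hha dd2 cp_zero(1)[OF h]])
  have o2: "orth ((1-h)*b + cc) (h*b - cc)"
    by (rule orth_lemma[OF h' ohb cc2 ohb0])
  have hob: "h*((1-h)*b) = 0" by (rule cp_zero(1)[OF h])
  have se: "sequiv (h*a + d) (cc + (1-h)*b)"
    by (rule sequiv_add[OF h cc1 sequiv_sym[OF dd1] hha hcc hd hob])
  have se': "sequiv (h*a + d) ((1-h)*b + cc)" using se by (simp add: add.commute)
  have vo: "very_orth (h*b - cc) ((1-h)*a - d)"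
    unfolding very_orth_def
    by (rule exI[of _ h]) (simp add: h right_diff_distrib hcc hd cp_zero(1)[OF h]
        mult.assoc[symmetric] c(1))
  have ea: "a = (h*a + d) + ((1-h)*a - d)" by (simp add: algebra_simps)
  have eb: "b = ((1-h)*b + cc) + (h*b - cc)" by (simp add: algebra_simps)
  show "\<exists>x y z w. a = x + y \<and> b = z + w \<and> orth x y \<and> orth z w \<and> sequiv x z
       \<and> very_orth w y"
    using ea eb o1 o2 se' vo by blast
next
  assume "\<exists>x y z w. a = x + y \<and> b = z + w \<and> orth x y \<and> orth z w \<and> sequiv x z
       \<and> very_orth w y"
  then obtain x y z w where ab: "a = x + y" "b = z + w" and oxy: "orth x y"
      and ozw: "orth z w" and sxz: "sequiv x z" and vo: "very_orth w y" by blast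
  obtain h where h: "central_proj h" and hw: "h*w = w" and hy: "h*y = 0"
    using vo unfolding very_orth_def by blast
  note c = cp_facts[OF h]
  have h': "central_proj (1-h)" by (rule cp_compl[OF h])
  have ha: "h*a = h*x" using ab(1) hy by (simp add: distrib_left)
  have hb: "h*b = h*z + w" using ab(2) hw by (simp add: distrib_left)
  have oa: "(1-h)*a = (1-h)*x + y" using ab(1) hy by (simp add: distrib_left left_diff_distrib)
  have ob: "(1-h)*b = (1-h)*z" using ab(2) hw by (simp add: distrib_left left_diff_distrib)
  have D1: "dominated (h*a) (h*b)"
    unfolding dominated_def ha hb
    using sequiv_central[OF h sxz] npo_of_orth[OF ozw, of h] c(3) by blast
  have D2: "dominated ((1-h)*b) ((1-h)*a)"
    unfolding dominated_def oa ob
    using sequiv_central[OF h' sequiv_sym[OF sxz]] npo_of_orth[OF oxy, of "1-h"]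
      cp_facts(3)[OF h'] by blast
  show "gen_comparable a b" unfolding gen_comparable_def using h D1 D2 by blast
qed

end
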